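(* The following are equivalent: (i) $\lim_{d\to\infty} n^{X_d}(\varepsilon)=\infty$ for every $\varepsilon\in(0,1)$; (ii) $\lim_{d\to\infty}\bar\lambda^{X_d}_1=0$.
   Context: For each $d\in\mathbb N$, $X_d$ is a random element of a separable Hilbert space $H_d$ with $\mathbb E X_d=0$ and $\mathbb E\|X_d\|_{H_d}^2<\infty$. For a centered Hilbert-space random element $Z$ with finite second moment, $\lambda^Z_1\ge\lambda^Z_2\ge\dots\ge 0$ denote the eigenvalues of its covariance operator $K^Z$ listed with multiplicity (padded with zeros if there are finitely many), $\Lambda^Z=\sum_k\lambda^Z_k=\mathbb E\|Z\|^2$, and $\bar\lambda^Z_k=\lambda^Z_k/\Lambda^Z$. It is assumed that $\lambda^{X_d}_1>0$ for all $d$. The average case approximation complexity is $n^{X_d}(\varepsilon)=\min\{n\in\mathbb N: e^{X_d}(n)\le \varepsilon\, e^{X_d}(0)\}$ for $\varepsilon\in(0,1)$, where $e^{X_d}(0)=(\mathbb E\|X_d\|^2)^{1/2}$ and $e^{X_d}(n)$ is the infimum of $(\mathbb E\|X_d-\sum_{m=1}^n l_m(X_d)\psi_m\|^2)^{1/2}$ over all $\psi_m\in H_d$, $l_m\in H_d^*$; equivalently $n^{X_d}(\varepsilon)=\min\{n\in\mathbb N:\ \sum_{k>n}\bar\lambda^{X_d}_k\le\varepsilon^2\}=\min\{n\in\mathbb N:\sum_{k=1}^n\bar\lambda^{X_d}_k\ge 1-\varepsilon^2\}$. *)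

theory Defs
  imports "HOL-Analysis.Analysis"
begin

text \<open>The statement depends on the random elements X_d only through the
  eigenvalue sequences of their covariance operators. An eigenvalue sequence
  (listed with multiplicity, non-increasing, padded with zeros) is modelled as
  a function nat => real; index 0 corresponds to lambda_1 of the paper.\<close>

definition eigen_seq :: "(nat \<Rightarrow> real) \<Rightarrow> bool" where
  "eigen_seq l \<longleftrightarrow> (\<forall>k. 0 \<le> l k) \<and> antimono l \<and> summable l \<and> 0 < l 0"

text \<open>Lambda = sum of all eigenvalues = E ||X||^2.\<close>
definition total_var :: "(nat \<Rightarrow> real) \<Rightarrow> real" where
  "total_var l = (\<Sum>k. l k)"

definition norm_eig :: "(nat \<Rightarrow> real) \<Rightarrow> nat \<Rightarrow> real" where
  "norm_eig l k = l k / total_var l"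

text \<open>Average case approximation complexity
  n(eps) = min { n : sum_{k > n} lambda-bar_k <= eps^2 }
  (with 1-based indexing of the paper; here the tail after the first n
  eigenvalues is indices k >= n).\<close>
definition avg_complexity :: "(nat \<Rightarrow> real) \<Rightarrow> real \<Rightarrow> nat" where
  "avg_complexity l \<epsilon> = (LEAST n. (\<Sum>k. norm_eig l (k + n)) \<le> \<epsilon>\<^sup>2)"

end

theory Submission
  imports Defs
begin

lemma ne_basic:
  assumes "eigen_seq l"
  shows "total_var l > 0" "\<And>k. norm_eig l k \<ge> 0" "\<And>k. norm_eig l k \<le> norm_eig l 0"
    "summable (norm_eig l)" "suminf (norm_eig l) = 1"
proof -
  have nn: "\<And>k. 0 \<le> l k" and am: "antimono l" and sm: "summable l" and p: "0 < l 0"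
    using assms unfolding eigen_seq_def by auto
  have "l 0 \<le> total_var l" unfolding total_var_def
    using sum_le_suminf[OF sm, of "{0}"] nn by auto
  thus T: "total_var l > 0" using p by linarith
  show "\<And>k. norm_eig l k \<ge> 0" unfolding norm_eig_def using nn T by simp
  show "\<And>k. norm_eig l k \<le> norm_eig l 0" unfolding norm_eig_def using am T
    by (simp add: antimonoD divide_right_mono)
  show s: "summable (norm_eig l)" unfolding norm_eig_def using summable_divide[OF sm] .
  show "suminf (norm_eig l) = 1" unfolding norm_eig_def
    using suminf_divide[OF sm, of "total_var l"] T by (simp add: total_var_def)
qed

lemma tail_eq:
  assumes "eigen_seq l"
  shows "(\<Sum>k. norm_eig l (k + n)) = 1 - (\<Sum>k<n. norm_eig l k)"
  using suminf_split_initial_segment[OF ne_basic(4)[OF assms], of n] ne_basic(5)[OF assms]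
  by simp

lemma upper1:
  assumes "eigen_seq l" "1 - norm_eig l 0 \<le> e\<^sup>2"
  shows "avg_complexity l e \<le> 1"
  unfolding avg_complexity_def
  by (rule Least_le) (use assms tail_eq[OF assms(1), of 1] in simp)

lemma lower:
  assumes "eigen_seq l" "0 < e" "e < 1"
  shows "real (avg_complexity l e) * norm_eig l 0 \<ge> 1 - e\<^sup>2"
proof -
  have "(\<lambda>n. \<Sum>k<n. norm_eig l k) \<longlonglongrightarrow> 1"
    using summable_LIMSEQ[OF ne_basic(4)[OF assms(1)]] ne_basic(5)[OF assms(1)] by simp
  moreover have "1 - e\<^sup>2 < 1" using assms by simp
  ultimately have "eventually (\<lambda>n. (\<Sum>k<n. norm_eig l k) > 1 - e\<^sup>2) sequentially"
    by (rule order_tendstoD)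
  then obtain n where "(\<Sum>k<n. norm_eig l k) > 1 - e\<^sup>2"
    by (meson eventually_sequentially order_refl)
  hence ex: "\<exists>n. (\<Sum>k. norm_eig l (k + n)) \<le> e\<^sup>2" using tail_eq[OF assms(1), of n] by (intro exI[of _ n]) linarith
  define m where "m = avg_complexity l e"
  have "(\<Sum>k. norm_eig l (k + m)) \<le> e\<^sup>2"
    unfolding m_def avg_complexity_def by (rule LeastI_ex[OF ex])
  hence "1 - e\<^sup>2 \<le> (\<Sum>k<m. norm_eig l k)" using tail_eq[OF assms(1), of m] by simp
  also have "\<dots> \<le> (\<Sum>k<m. norm_eig l 0)"
    by (rule sum_mono) (use ne_basic(3)[OF assms(1)] in auto)
  finally show ?thesis by (simp add: m_def)
qed

theorem proposition1:
  fixes lam :: "nat \<Rightarrow> nat \<Rightarrow> real"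
  assumes "\<And>d. eigen_seq (lam d)"
  shows "(\<forall>\<epsilon>::real. 0 < \<epsilon> \<and> \<epsilon> < 1 \<longrightarrow>
            filterlim (\<lambda>d. avg_complexity (lam d) \<epsilon>) at_top sequentially)
         \<longleftrightarrow> ((\<lambda>d. norm_eig (lam d) 0) \<longlonglongrightarrow> 0)"
proof
  assume H: "\<forall>\<epsilon>::real. 0 < \<epsilon> \<and> \<epsilon> < 1 \<longrightarrow>
            filterlim (\<lambda>d. avg_complexity (lam d) \<epsilon>) at_top sequentially"
  show "(\<lambda>d. norm_eig (lam d) 0) \<longlonglongrightarrow> 0"
  proof (rule LIMSEQ_I)
    fix r :: real assume r: "0 < r"
    define c where "c = min r (1/2)"
    define e where "e = sqrt (1 - c)"
    have c: "0 < c" "c \<le> 1/2" "c \<le> r" using r by (auto simp: c_def)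
    have e: "0 < e" "e < 1" "e\<^sup>2 = 1 - c" using c by (auto simp: e_def)
    have "filterlim (\<lambda>d. avg_complexity (lam d) e) at_top sequentially" using H e by auto
    hence "eventually (\<lambda>d. 2 \<le> avg_complexity (lam d) e) sequentially"
      by (simp add: filterlim_at_top)
    then obtain N where N: "\<And>d. d \<ge> N \<Longrightarrow> 2 \<le> avg_complexity (lam d) e"
      by (auto simp: eventually_sequentially)
    show "\<exists>no. \<forall>n\<ge>no. norm (norm_eig (lam n) 0 - 0) < r"
    proof (intro exI allI impI)
      fix d assume "d \<ge> N"
      hence 2: "2 \<le> avg_complexity (lam d) e" by (rule N)
      have "norm_eig (lam d) 0 < c"
      proof (rule ccontr)
        assume "\<not> ?thesis"
        hence "1 - norm_eig (lam d) 0 \<le> e\<^sup>2" using e by simp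
        from upper1[OF assms this] 2 show False by simp
      qed
      thus "norm (norm_eig (lam d) 0 - 0) < r" using ne_basic(2)[OF assms, of d 0] c by simp
    qed
  qed
next
  assume L: "(\<lambda>d. norm_eig (lam d) 0) \<longlonglongrightarrow> 0"
  show "\<forall>\<epsilon>::real. 0 < \<epsilon> \<and> \<epsilon> < 1 \<longrightarrow>
            filterlim (\<lambda>d. avg_complexity (lam d) \<epsilon>) at_top sequentially"
  proof (intro allI impI)
    fix e :: real assume e: "0 < e \<and> e < 1"
    have pe: "0 < 1 - e\<^sup>2" using e by (simp add: power_less_one_iff)
    show "filterlim (\<lambda>d. avg_complexity (lam d) e) at_top sequentially"
      unfolding filterlim_at_top
    proof
      fix Z :: nat
      have "0 < (1 - e\<^sup>2) / (real Z + 1)" using pe by simp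
      from order_tendstoD(2)[OF L this]
      show "eventually (\<lambda>d. Z \<le> avg_complexity (lam d) e) sequentially"
      proof (rule eventually_mono)
        fix d assume b: "norm_eig (lam d) 0 < (1 - e\<^sup>2) / (real Z + 1)"
        have bp: "0 < norm_eig (lam d) 0"
          using ne_basic(1)[OF assms] assms[of d] unfolding norm_eig_def eigen_seq_def by simp
        have lo: "real (avg_complexity (lam d) e) * norm_eig (lam d) 0 \<ge> 1 - e\<^sup>2"
          using lower[OF assms] e by auto
        have "(real Z + 1) * norm_eig (lam d) 0 < 1 - e\<^sup>2"
          using b by (simp add: field_simps)
        hence "(real Z + 1) * norm_eig (lam d) 0 < real (avg_complexity (lam d) e) * norm_eig (lam d) 0"
          using lo by linarith
        hence "real Z + 1 < real (avg_complexity (lam d) e)" using bp by simp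
        thus "Z \<le> avg_complexity (lam d) e" by simp
      qed
    qed
  qed
qed

end
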